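(* Let $m\ge 2$, $n\ge 2$, and let $P:[m]\times[m]\to\mathbb{R}\mathrm{P}^n$ be a Q-net. Suppose that for every $d\in[m-1]$ the iterated Laplace transforms $\mathcal{L}_A^dP,\ \mathcal{L}_B^dP:[m-d]\times[m-d]\to\mathbb{R}\mathrm{P}^n$ are well-defined Q-nets. Then $\mathcal{L}_A^{m-1}P$ and $\mathcal{L}_B^{m-1}P$ are two points (each is defined on the one-element set $[1]\times[1]$). Suppose moreover that all points $P_{i,j}$ with $(i,j)\in[m]\times[m]$, $(i,j)\neq(m,m)$, lie on a quadric $\mathcal{Q}\subset\mathbb{R}\mathrm{P}^n$. Then $P_{m,m}\in\mathcal{Q}$ if and only if the points $\mathcal{L}_A^{m-1}P$ and $\mathcal{L}_B^{m-1}P$ are conjugate with respect to $\mathcal{Q}$.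
   Context: $[m]=\{1,\dots,m\}$. $X\vee Y$ denotes the projective join. A Q-net on $D\subset\mathbb{Z}^2$ (here $D=[k]\times[k]$) is a map $P:D\to\mathbb{R}\mathrm{P}^n$ such that for every elementary quad in $D$ the four points $P_{i,j},P_{i+1,j},P_{i+1,j+1},P_{i,j+1}$ are coplanar. Its Laplace points are $A_{i,j}=(P_{i,j}\vee P_{i+1,j})\cap(P_{i,j+1}\vee P_{i+1,j+1})$ and $B_{i,j}=(P_{i,j}\vee P_{i,j+1})\cap(P_{i+1,j}\vee P_{i+1,j+1})$; for $P$ on $[k]\times[k]$ the Laplace transforms are $\mathcal{L}_AP(i,j)=A_{i,j}$, $\mathcal{L}_BP(i,j)=B_{i,j}$ on $[k-1]\times[k-1]$, and $\mathcal{L}_A^d,\mathcal{L}_B^d$ denote $d$-fold iterates. A quadric is $\mathcal{Q}=\{[x]:\varphi(x,x)=0\}$ for a nonzero symmetric bilinear form $\varphi$ on $\mathbb{R}^{n+1}$; points $[x],[y]$ are conjugate w.r.t. $\mathcal{Q}$ if $\varphi(x,y)=0$. Standing assumption of the paper: all data are generic (in general position subject to the stated constraints; e.g. vertices of each quad distinct, no three collinear). *)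

theory Defs
  imports "HOL-Analysis.Analysis"
begin

text \<open>Points of RP^n are represented by nonzero vectors in real^'n (CARD('n) = n+1),
  up to nonzero scaling. Nets are indexed 1-based: a net on [k]x[k] is a map
  nat => nat => real^'n of which only the values at 1 <= i,j <= k matter.\<close>

text \<open>A generic quad: four points, any three of them linearly independent
  (i.e. the projective points are distinct and no three are collinear),
  and all four coplanar (span of dimension at most 3).\<close>
definition generic_planar_quad :: "real^'n \<Rightarrow> real^'n \<Rightarrow> real^'n \<Rightarrow> real^'n \<Rightarrow> bool" where
  "generic_planar_quad a b c d \<longleftrightarrow>
     dim {a, b, c} = 3 \<and> dim {a, b, d} = 3 \<and> dim {a, c, d} = 3 \<and> dim {b, c, d} = 3 \<and>
     dim {a, b, c, d} \<le> 3"

definition qnet :: "nat \<Rightarrow> (nat \<Rightarrow> nat \<Rightarrow> real^'n) \<Rightarrow> bool" where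
  "qnet k P \<longleftrightarrow>
     (\<forall>i\<in>{1..k}. \<forall>j\<in>{1..k}. P i j \<noteq> 0) \<and>
     (\<forall>i\<in>{1..<k}. \<forall>j\<in>{1..<k}.
        generic_planar_quad (P i j) (P (Suc i) j) (P (Suc i) (Suc j)) (P i (Suc j)))"

definition line_meet :: "real^'n \<Rightarrow> real^'n \<Rightarrow> real^'n \<Rightarrow> real^'n \<Rightarrow> (real^'n) set" where
  "line_meet a b c d = span {a, b} \<inter> span {c, d}"

text \<open>L is (a representative family of) the Laplace transform L_A of the net P on [k]x[k]:
  each L i j (i,j in [k-1]) is a nonzero vector representing the well-defined intersection
  point (P_{i,j} v P_{i+1,j}) meet (P_{i,j+1} v P_{i+1,j+1}).\<close>
definition laplace_A :: "nat \<Rightarrow> (nat \<Rightarrow> nat \<Rightarrow> real^'n) \<Rightarrow> (nat \<Rightarrow> nat \<Rightarrow> real^'n) \<Rightarrow> bool" where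
  "laplace_A k P L \<longleftrightarrow>
     (\<forall>i\<in>{1..<k}. \<forall>j\<in>{1..<k}.
        dim (line_meet (P i j) (P (Suc i) j) (P i (Suc j)) (P (Suc i) (Suc j))) = 1 \<and>
        L i j \<noteq> 0 \<and> L i j \<in> line_meet (P i j) (P (Suc i) j) (P i (Suc j)) (P (Suc i) (Suc j)))"

definition laplace_B :: "nat \<Rightarrow> (nat \<Rightarrow> nat \<Rightarrow> real^'n) \<Rightarrow> (nat \<Rightarrow> nat \<Rightarrow> real^'n) \<Rightarrow> bool" where
  "laplace_B k P L \<longleftrightarrow>
     (\<forall>i\<in>{1..<k}. \<forall>j\<in>{1..<k}.
        dim (line_meet (P i j) (P i (Suc j)) (P (Suc i) j) (P (Suc i) (Suc j))) = 1 \<and>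
        L i j \<noteq> 0 \<and> L i j \<in> line_meet (P i j) (P i (Suc j)) (P (Suc i) j) (P (Suc i) (Suc j)))"

definition bform :: "real^'n^'n \<Rightarrow> real^'n \<Rightarrow> real^'n \<Rightarrow> real" where
  "bform M x y = x \<bullet> (M *v y)"

definition on_quadric :: "real^'n^'n \<Rightarrow> real^'n \<Rightarrow> bool" where
  "on_quadric M x \<longleftrightarrow> bform M x x = 0"

definition conjugate :: "real^'n^'n \<Rightarrow> real^'n \<Rightarrow> real^'n \<Rightarrow> bool" where
  "conjugate M x y \<longleftrightarrow> bform M x y = 0"

end

theory Submission
  imports Defs
begin

lemma bform_add_left: "bform M (x + y) z = bform M x z + bform M y z"
  by (simp add: bform_def inner_add_left)
lemma bform_add_right: "bform M z (x + y) = bform M z x + bform M z y"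
  by (simp add: bform_def inner_add_right matrix_vector_right_distrib)
lemma bform_diff_left: "bform M (x - y) z = bform M x z - bform M y z"
  by (simp add: bform_def inner_diff_left)
lemma bform_diff_right: "bform M z (x - y) = bform M z x - bform M z y"
  by (simp add: bform_def inner_diff_right matrix_vector_mult_diff_distrib)
lemma bform_scale_left: "bform M (c *\<^sub>R x) z = c * bform M x z"
  by (simp add: bform_def)
lemma bform_scale_right: "bform M z (c *\<^sub>R x) = c * bform M z x"
  by (simp add: bform_def matrix_vector_mult_scaleR)
lemma bform_sym: "transpose M = M \<Longrightarrow> bform M x y = bform M y x"
  unfolding bform_def
  by (metis dot_lmul_matrix inner_commute transpose_matrix_vector)

lemmas bform_simps = bform_add_left bform_add_right bform_diff_left bform_diff_right
  bform_scale_left bform_scale_right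

lemma key_identity:
  assumes "c = x *\<^sub>R b + y *\<^sub>R d + z *\<^sub>R a"
    and "c' = x' *\<^sub>R b' + y' *\<^sub>R d' + z' *\<^sub>R a'"
  shows "bform M (x *\<^sub>R b + z *\<^sub>R a) (y' *\<^sub>R d' + z' *\<^sub>R a')
       + bform M (y *\<^sub>R d + z *\<^sub>R a) (x' *\<^sub>R b' + z' *\<^sub>R a')
     = bform M c c' - x * x' * bform M b b' - y * y' * bform M d d' + z * z' * bform M a a'"
  unfolding assms by (simp add: bform_simps algebra_simps)

lemma quad_decomp:
  assumes "generic_planar_quad a b c d"
  shows "\<exists>x y z. c = x *\<^sub>R b + y *\<^sub>R d + z *\<^sub>R a"
proof -
  have 3: "dim {a, b, d} = 3" and 4: "dim {a, b, c, d} \<le> 3"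
    using assms by (auto simp: generic_planar_quad_def)
  have "c \<in> span {a, b, d}"
  proof (rule ccontr)
    assume "c \<notin> span {a, b, d}"
    then have "dim (insert c {a, b, d}) = 4" using 3 by (simp add: dim_insert)
    moreover have "insert c {a, b, d} = {a, b, c, d}" by auto
    ultimately show False using 4 by simp
  qed
  then have "c \<in> span {b, d, a}" by (simp add: insert_commute)
  then obtain x where "c - x *\<^sub>R b \<in> span {d, a}" by (auto simp: span_breakdown_eq)
  then obtain y where "c - x *\<^sub>R b - y *\<^sub>R d \<in> span {a}" by (auto simp: span_breakdown_eq)
  then obtain z where "c - x *\<^sub>R b - y *\<^sub>R d = z *\<^sub>R a" by (auto simp: span_singleton)
  then have "c = x *\<^sub>R b + y *\<^sub>R d + z *\<^sub>R a" by (simp add: algebra_simps)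
  then show ?thesis by blast
qed

lemma dim1_scalar:
  fixes S :: "(real^'n) set"
  assumes "subspace S" "dim S = 1" "L \<in> S" "L \<noteq> 0" "v \<in> S"
  shows "\<exists>t. v = t *\<^sub>R L"
proof -
  have "span {L} = span S"
  proof (rule dim_eq_span)
    show "{L} \<subseteq> S" using assms by blast
    have "dim {L} = 1" using assms(4) by (simp add: dim_insert)
    then show "dim S \<le> dim {L}" using assms(2) by simp
  qed
  then have "v \<in> span {L}" using assms span_base by blast
  then show ?thesis by (auto simp: span_singleton)
qed

lemma dim_le2:
  fixes a b :: "real^'n"
  assumes "S \<subseteq> span {a, b}"
  shows "dim S \<le> 2"
proof -
  have "dim S \<le> card {a, b}" using dim_le_card[OF assms] by simp
  also have "\<dots> \<le> 2" by (simp add: card_insert_le_m1)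
  finally show ?thesis .
qed

lemma A_point:
  fixes a b c d :: "real^'n"
  assumes g: "generic_planar_quad a b c d" and c: "c = x *\<^sub>R b + y *\<^sub>R d + z *\<^sub>R a"
    and d1: "dim (line_meet a b d c) = 1" and L: "L \<noteq> 0" "L \<in> line_meet a b d c"
  shows "\<exists>t. t \<noteq> 0 \<and> x *\<^sub>R b + z *\<^sub>R a = t *\<^sub>R L"
proof -
  have in1: "x *\<^sub>R b + z *\<^sub>R a \<in> span {a, b}"
    by (simp add: span_add span_base span_scale)
  have "x *\<^sub>R b + z *\<^sub>R a = c - y *\<^sub>R d" using c by (simp add: algebra_simps)
  moreover have "c - y *\<^sub>R d \<in> span {d, c}"
    by (simp add: span_diff span_base span_scale)
  ultimately have in2: "x *\<^sub>R b + z *\<^sub>R a \<in> span {d, c}" by simp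
  have sub: "subspace (line_meet a b d c)"
    by (simp add: line_meet_def subspace_inter subspace_span)
  obtain t where t: "x *\<^sub>R b + z *\<^sub>R a = t *\<^sub>R L"
    using dim1_scalar[OF sub d1 L(2) L(1)] in1 in2 by (auto simp: line_meet_def)
  have "t \<noteq> 0"
  proof
    assume "t = 0"
    then have "c = y *\<^sub>R d" using t c by (simp add: algebra_simps)
    then have "{a, c, d} \<subseteq> span {a, d}" by (auto simp: span_base span_scale)
    then have "dim {a, c, d} \<le> 2" by (rule dim_le2)
    then show False using g by (simp add: generic_planar_quad_def)
  qed
  then show ?thesis using t by blast
qed

lemma B_point:
  fixes a b c d :: "real^'n"
  assumes g: "generic_planar_quad a b c d" and c: "c = x *\<^sub>R b + y *\<^sub>R d + z *\<^sub>R a"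
    and d1: "dim (line_meet a d b c) = 1" and L: "L \<noteq> 0" "L \<in> line_meet a d b c"
  shows "\<exists>t. t \<noteq> 0 \<and> y *\<^sub>R d + z *\<^sub>R a = t *\<^sub>R L"
proof -
  have in1: "y *\<^sub>R d + z *\<^sub>R a \<in> span {a, d}"
    by (simp add: span_add span_base span_scale)
  have "y *\<^sub>R d + z *\<^sub>R a = c - x *\<^sub>R b" using c by (simp add: algebra_simps)
  moreover have "c - x *\<^sub>R b \<in> span {b, c}"
    by (simp add: span_diff span_base span_scale)
  ultimately have in2: "y *\<^sub>R d + z *\<^sub>R a \<in> span {b, c}" by simp
  have sub: "subspace (line_meet a d b c)"
    by (simp add: line_meet_def subspace_inter subspace_span)
  obtain t where t: "y *\<^sub>R d + z *\<^sub>R a = t *\<^sub>R L"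
    using dim1_scalar[OF sub d1 L(2) L(1)] in1 in2 by (auto simp: line_meet_def)
  have "t \<noteq> 0"
  proof
    assume "t = 0"
    then have "c = x *\<^sub>R b" using t c by (simp add: algebra_simps)
    then have "{a, b, c} \<subseteq> span {a, b}" by (auto simp: span_base span_scale)
    then have "dim {a, b, c} \<le> 2" by (rule dim_le2)
    then show False using g by (simp add: generic_planar_quad_def)
  qed
  then show ?thesis using t by blast
qed

lemma meet_lemma:
  fixes a b c d u1 u2 u3 v :: "real^'n"
  assumes "dim {a, b, d} = 3" "a \<in> span {u1, u2}" "d \<in> span {u1, u2}"
    "b \<in> span {u2, u3}" "c \<in> span {u2, u3}" "v \<in> span {a, d}" "v \<in> span {b, c}"
  shows "v \<in> span {u2}"
proof -
  have sub1: "span {u1, u2} \<subseteq> span {u1, u2, u3}" by (rule span_mono) auto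
  have sub2: "span {u2, u3} \<subseteq> span {u1, u2, u3}" by (rule span_mono) auto
  have "{a, b, d} \<subseteq> span {u1, u2, u3}" using assms sub1 sub2 by auto
  then have "3 \<le> dim {u1, u2, u3}" using dim_mono assms(1) by metis
  moreover have "dim {u1, u2, u3} \<le> card {u1, u2, u3}" by (rule dim_le_card) (auto simp: span_base)
  moreover have "card {u1, u2, u3} \<le> 3" by (simp add: card_insert_le_m1)
  ultimately have cd: "dim {u1, u2, u3} = card {u1, u2, u3}" "card {u1, u2, u3} = 3" by auto
  have ind: "independent {u1, u2, u3}"
    using card_eq_dim[of "{u1, u2, u3}" "{u1, u2, u3}"] cd by (auto simp: span_base)
  have dist: "u1 \<noteq> u2" "u1 \<noteq> u3" "u2 \<noteq> u3" using cd(2) by (auto simp: card_insert_if split: if_splits)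
  have "span {a, d} \<subseteq> span {u1, u2}" using assms(2,3) by (simp add: span_minimal subspace_span)
  then have v1: "v \<in> span {u1, u2}" using assms(6) by auto
  have "span {b, c} \<subseteq> span {u2, u3}" using assms(4,5) by (simp add: span_minimal subspace_span)
  then have v2: "v \<in> span {u2, u3}" using assms(7) by auto
  obtain k where k: "v - k *\<^sub>R u1 \<in> span {u2}" using v1 by (auto simp: span_breakdown_eq)
  have v2': "v \<in> span (insert u3 {u2})" using v2 by (simp add: insert_commute)
  obtain k' where k': "v - k' *\<^sub>R u3 \<in> span {u2}" using v2' by (auto simp: span_breakdown_eq)
  show ?thesis
  proof (cases "k = 0")
    case True then show ?thesis using k by simp
  next
    case False
    have "(v - k' *\<^sub>R u3) - (v - k *\<^sub>R u1) \<in> span {u2}" using k' k by (rule span_diff)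
    then have "k *\<^sub>R u1 - k' *\<^sub>R u3 \<in> span {u2}" by (simp add: algebra_simps)
    moreover have "span {u2} \<subseteq> span {u3, u2}" by (rule span_mono) auto
    ultimately have e1: "k *\<^sub>R u1 - k' *\<^sub>R u3 \<in> span {u3, u2}" by auto
    have e2: "k' *\<^sub>R u3 \<in> span {u3, u2}" by (simp add: span_base span_scale)
    have "k *\<^sub>R u1 = (k *\<^sub>R u1 - k' *\<^sub>R u3) + k' *\<^sub>R u3" by simp
    then have "k *\<^sub>R u1 \<in> span {u3, u2}" using span_add[OF e1 e2] by simp
    then have "(1/k) *\<^sub>R (k *\<^sub>R u1) \<in> span {u3, u2}" by (rule span_scale)
    then have "u1 \<in> span ({u1, u2, u3} - {u1})" using False dist by (simp add: insert_commute insert_Diff_if)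
    then show ?thesis using ind by (meson dependent_def insertI1)
  qed
qed

lemma step_lemma:
  fixes a b c d a' b' c' d' u1 u2 u3 w1 w2 w3 LAij LBij :: "real^'n"
  assumes g: "generic_planar_quad a b c d" and g': "generic_planar_quad a' b' c' d'"
    and lA: "dim (line_meet a b d c) = 1" "LAij \<noteq> 0" "LAij \<in> line_meet a b d c"
    and lB: "dim (line_meet a' d' b' c') = 1" "LBij \<noteq> 0" "LBij \<in> line_meet a' d' b' c'"
    and su: "a \<in> span {u1, u2}" "d \<in> span {u1, u2}" "b \<in> span {u2, u3}" "c \<in> span {u2, u3}"
    and sw: "a' \<in> span {w1, w2}" "b' \<in> span {w1, w2}" "d' \<in> span {w2, w3}" "c' \<in> span {w2, w3}"
    and cen: "bform M u2 w2 = 0"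
  shows "\<exists>x x' y y' z z' t. t \<noteq> 0 \<and> t * bform M LAij LBij =
     bform M c c' - x * x' * bform M b b' - y * y' * bform M d d' + z * z' * bform M a a'"
proof -
  obtain x y z where c: "c = x *\<^sub>R b + y *\<^sub>R d + z *\<^sub>R a" using quad_decomp[OF g] by blast
  obtain x' y' z' where c': "c' = x' *\<^sub>R b' + y' *\<^sub>R d' + z' *\<^sub>R a'" using quad_decomp[OF g'] by blast
  obtain t1 where t1: "t1 \<noteq> 0" "x *\<^sub>R b + z *\<^sub>R a = t1 *\<^sub>R LAij"
    using A_point[OF g c lA] by blast
  obtain t2 where t2: "t2 \<noteq> 0" "y' *\<^sub>R d' + z' *\<^sub>R a' = t2 *\<^sub>R LBij"
    using B_point[OF g' c' lB] by blast
  have d3: "dim {a, b, d} = 3" using g by (simp add: generic_planar_quad_def)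
  have d3': "dim {a', d', b'} = 3" using g' by (simp add: generic_planar_quad_def insert_commute)
  have v1: "y *\<^sub>R d + z *\<^sub>R a \<in> span {a, d}" by (simp add: span_add span_base span_scale)
  have "y *\<^sub>R d + z *\<^sub>R a = c - x *\<^sub>R b" using c by (simp add: algebra_simps)
  moreover have "c - x *\<^sub>R b \<in> span {b, c}" by (simp add: span_diff span_base span_scale)
  ultimately have v2: "y *\<^sub>R d + z *\<^sub>R a \<in> span {b, c}" by simp
  have "y *\<^sub>R d + z *\<^sub>R a \<in> span {u2}" by (rule meet_lemma[OF d3 su v1 v2])
  then obtain r1 where r1: "y *\<^sub>R d + z *\<^sub>R a = r1 *\<^sub>R u2" by (auto simp: span_singleton)
  have v1': "x' *\<^sub>R b' + z' *\<^sub>R a' \<in> span {a', b'}" by (simp add: span_add span_base span_scale)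
  have "x' *\<^sub>R b' + z' *\<^sub>R a' = c' - y' *\<^sub>R d'" using c' by (simp add: algebra_simps)
  moreover have "c' - y' *\<^sub>R d' \<in> span {d', c'}" by (simp add: span_diff span_base span_scale)
  ultimately have v2': "x' *\<^sub>R b' + z' *\<^sub>R a' \<in> span {d', c'}" by simp
  have "x' *\<^sub>R b' + z' *\<^sub>R a' \<in> span {w2}"
    by (rule meet_lemma[OF d3' sw(1) sw(2) sw(3) sw(4) v1' v2'])
  then obtain r2 where r2: "x' *\<^sub>R b' + z' *\<^sub>R a' = r2 *\<^sub>R w2" by (auto simp: span_singleton)
  have "bform M (x *\<^sub>R b + z *\<^sub>R a) (y' *\<^sub>R d' + z' *\<^sub>R a')
       + bform M (y *\<^sub>R d + z *\<^sub>R a) (x' *\<^sub>R b' + z' *\<^sub>R a')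
     = bform M c c' - x * x' * bform M b b' - y * y' * bform M d d' + z * z' * bform M a a'"
    by (rule key_identity[OF c c'])
  then have "(t1 * t2) * bform M LAij LBij =
     bform M c c' - x * x' * bform M b b' - y * y' * bform M d d' + z * z' * bform M a a'"
    unfolding t1(2) t2(2) r1 r2 by (simp add: bform_simps cen mult.commute mult.left_commute)
  moreover have "t1 * t2 \<noteq> 0" using t1 t2 by simp
  ultimately show ?thesis by blast
qed

lemma base_step:
  fixes a b c d LAij LBij :: "real^'n"
  assumes g: "generic_planar_quad a b c d" and sym: "transpose M = M"
    and lA: "dim (line_meet a b d c) = 1" "LAij \<noteq> 0" "LAij \<in> line_meet a b d c"
    and lB: "dim (line_meet a d b c) = 1" "LBij \<noteq> 0" "LBij \<in> line_meet a d b c"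
  shows "\<exists>x y z t. t \<noteq> 0 \<and> t * bform M LAij LBij =
     bform M c c - x * x * bform M b b - y * y * bform M d d + z * z * bform M a a"
proof -
  obtain x y z where c: "c = x *\<^sub>R b + y *\<^sub>R d + z *\<^sub>R a" using quad_decomp[OF g] by blast
  obtain t1 where t1: "t1 \<noteq> 0" "x *\<^sub>R b + z *\<^sub>R a = t1 *\<^sub>R LAij"
    using A_point[OF g c lA] by blast
  obtain t2 where t2: "t2 \<noteq> 0" "y *\<^sub>R d + z *\<^sub>R a = t2 *\<^sub>R LBij"
    using B_point[OF g c lB] by blast
  have "bform M (x *\<^sub>R b + z *\<^sub>R a) (y *\<^sub>R d + z *\<^sub>R a)
       + bform M (y *\<^sub>R d + z *\<^sub>R a) (x *\<^sub>R b + z *\<^sub>R a)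
     = bform M c c - x * x * bform M b b - y * y * bform M d d + z * z * bform M a a"
    by (rule key_identity[OF c c])
  then have "(2 * t1 * t2) * bform M LAij LBij =
     bform M c c - x * x * bform M b b - y * y * bform M d d + z * z * bform M a a"
    unfolding t1(2) t2(2) using bform_sym[OF sym, of LBij LAij] by (simp add: bform_simps)
  moreover have "2 * t1 * t2 \<noteq> 0" using t1 t2 by simp
  ultimately show ?thesis by blast
qed

lemma lapA_facts:
  assumes "laplace_A k U L" "i \<in> {1..<k}" "j \<in> {1..<k}"
  shows "dim (line_meet (U i j) (U (Suc i) j) (U i (Suc j)) (U (Suc i) (Suc j))) = 1"
    "L i j \<noteq> 0" "L i j \<in> line_meet (U i j) (U (Suc i) j) (U i (Suc j)) (U (Suc i) (Suc j))"
    "L i j \<in> span {U i j, U (Suc i) j}" "L i j \<in> span {U i (Suc j), U (Suc i) (Suc j)}"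
  using assms unfolding laplace_A_def line_meet_def by auto

lemma lapB_facts:
  assumes "laplace_B k U L" "i \<in> {1..<k}" "j \<in> {1..<k}"
  shows "dim (line_meet (U i j) (U i (Suc j)) (U (Suc i) j) (U (Suc i) (Suc j))) = 1"
    "L i j \<noteq> 0" "L i j \<in> line_meet (U i j) (U i (Suc j)) (U (Suc i) j) (U (Suc i) (Suc j))"
    "L i j \<in> span {U i j, U i (Suc j)}" "L i j \<in> span {U (Suc i) j, U (Suc i) (Suc j)}"
  using assms unfolding laplace_B_def line_meet_def by auto

lemma qnet_quad:
  assumes "qnet k U" "i \<in> {1..<k}" "j \<in> {1..<k}"
  shows "generic_planar_quad (U i j) (U (Suc i) j) (U (Suc i) (Suc j)) (U i (Suc j))"
  using assms unfolding qnet_def by auto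

lemma main_induction:
  fixes m :: nat
    and P :: "nat \<Rightarrow> nat \<Rightarrow> real^'n"
    and LA LB :: "nat \<Rightarrow> nat \<Rightarrow> nat \<Rightarrow> real^'n"
    and M :: "real^'n^'n"
  assumes m2: "m \<ge> 2"
    and qP: "qnet m P"
    and A0: "LA 0 = P" and B0: "LB 0 = P"
    and hA: "\<forall>d\<in>{1..m-1}. laplace_A (m - d + 1) (LA (d - 1)) (LA d) \<and> qnet (m - d) (LA d)"
    and hB: "\<forall>d\<in>{1..m-1}. laplace_B (m - d + 1) (LB (d - 1)) (LB d) \<and> qnet (m - d) (LB d)"
    and sym: "transpose M = M"
    and onq: "\<forall>i\<in>{1..m}. \<forall>j\<in>{1..m}. (i, j) \<noteq> (m, m) \<longrightarrow> on_quadric M (P i j)"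
  shows "d \<le> m - 1 \<Longrightarrow>
    (\<forall>i\<in>{1..m-d}. \<forall>j\<in>{1..m-d}. (i, j) \<noteq> (m-d, m-d) \<longrightarrow> bform M (LA d i j) (LB d i j) = 0) \<and>
    (bform M (LA d (m-d) (m-d)) (LB d (m-d) (m-d)) = 0 \<longleftrightarrow> bform M (P m m) (P m m) = 0)"
proof (induction d rule: less_induct)
  case (less d)
  have qA: "qnet (m - e) (LA e)" if "e \<le> m - 1" for e
    using that hA qP A0 by (cases "e = 0") auto
  have qB: "qnet (m - e) (LB e)" if "e \<le> m - 1" for e
    using that hB qP B0 by (cases "e = 0") auto
  have lA: "laplace_A (m - e + 1) (LA (e - 1)) (LA e)" if "1 \<le> e" "e \<le> m - 1" for e
    using that hA by auto
  have lB: "laplace_B (m - e + 1) (LB (e - 1)) (LB e)" if "1 \<le> e" "e \<le> m - 1" for e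
    using that hB by auto
  have q0: "bform M (P i j) (P i j) = 0" if "i \<in> {1..m}" "j \<in> {1..m}" "(i, j) \<noteq> (m, m)" for i j
    using onq that by (auto simp: on_quadric_def)
  consider (z) "d = 0" | (o) "d = 1" | (g) "d \<ge> 2" by linarith
  then show ?case
  proof cases
    case z
    then show ?thesis using q0 A0 B0 by auto
  next
    case o
    have lA1: "laplace_A m P (LA 1)" using lA[of 1] m2 A0 by simp
    have lB1: "laplace_B m P (LB 1)" using lB[of 1] m2 B0 by simp
    have key: "\<exists>x y z t. t \<noteq> 0 \<and> t * bform M (LA 1 i j) (LB 1 i j) =
       bform M (P (Suc i) (Suc j)) (P (Suc i) (Suc j)) - x * x * bform M (P (Suc i) j) (P (Suc i) j)
       - y * y * bform M (P i (Suc j)) (P i (Suc j)) + z * z * bform M (P i j) (P i j)"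
      if ij: "i \<in> {1..m-1}" "j \<in> {1..m-1}" for i j
    proof -
      have ij': "i \<in> {1..<m}" "j \<in> {1..<m}" using ij m2 by auto
      show ?thesis
        by (rule base_step[OF qnet_quad[OF qP ij'] sym lapA_facts(1-3)[OF lA1 ij'] lapB_facts(1-3)[OF lB1 ij']])
    qed
    show ?thesis
    proof
      show "\<forall>i\<in>{1..m-d}. \<forall>j\<in>{1..m-d}. (i, j) \<noteq> (m-d, m-d) \<longrightarrow> bform M (LA d i j) (LB d i j) = 0"
      proof (intro ballI impI)
        fix i j assume ij: "i \<in> {1..m-d}" "j \<in> {1..m-d}" and nc: "(i, j) \<noteq> (m-d, m-d)"
        obtain x y z t where t: "t \<noteq> 0" "t * bform M (LA 1 i j) (LB 1 i j) =
          bform M (P (Suc i) (Suc j)) (P (Suc i) (Suc j)) - x * x * bform M (P (Suc i) j) (P (Suc i) j)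
          - y * y * bform M (P i (Suc j)) (P i (Suc j)) + z * z * bform M (P i j) (P i j)"
          using key[of i j] ij o by auto
        have ne: "(Suc i, Suc j) \<noteq> (m, m)" using nc o m2 by auto
        have "Suc i \<in> {1..m}" "Suc j \<in> {1..m}" using ij o m2 by auto
        then have "bform M (P (Suc i) (Suc j)) (P (Suc i) (Suc j)) = 0" using q0 ne by blast
        moreover have "bform M (P (Suc i) j) (P (Suc i) j) = 0"
          by (rule q0) (use ij o m2 in auto)
        moreover have "bform M (P i (Suc j)) (P i (Suc j)) = 0"
          by (rule q0) (use ij o m2 in auto)
        moreover have "bform M (P i j) (P i j) = 0"
          by (rule q0) (use ij o m2 in auto)
        ultimately show "bform M (LA d i j) (LB d i j) = 0" using t o by simp
      qed
    next
      let ?k = "m - 1"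
      obtain x y z t where t: "t \<noteq> 0" "t * bform M (LA 1 ?k ?k) (LB 1 ?k ?k) =
          bform M (P (Suc ?k) (Suc ?k)) (P (Suc ?k) (Suc ?k)) - x * x * bform M (P (Suc ?k) ?k) (P (Suc ?k) ?k)
          - y * y * bform M (P ?k (Suc ?k)) (P ?k (Suc ?k)) + z * z * bform M (P ?k ?k) (P ?k ?k)"
      proof -
        have "?k \<in> {1..m-1}" using m2 by auto
        from key[OF this this] show ?thesis using that by blast
      qed
      have sk: "Suc ?k = m" using m2 by simp
      have "bform M (P (Suc ?k) ?k) (P (Suc ?k) ?k) = 0" by (rule q0) (use m2 in auto)
      moreover have "bform M (P ?k (Suc ?k)) (P ?k (Suc ?k)) = 0" by (rule q0) (use m2 in auto)
      moreover have "bform M (P ?k ?k) (P ?k ?k) = 0" by (rule q0) (use m2 in auto)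
      ultimately have "t * bform M (LA 1 ?k ?k) (LB 1 ?k ?k) = bform M (P m m) (P m m)"
        using t sk by simp
      then show "bform M (LA d (m-d) (m-d)) (LB d (m-d) (m-d)) = 0 \<longleftrightarrow> bform M (P m m) (P m m) = 0"
        using t(1) o by auto
    qed
  next
    case g
    define e where "e = d - 1"
    define f where "f = d - 2"
    have ef: "d = Suc e" "e = Suc f" using g e_def f_def by auto
    have dle: "d \<le> m - 1" using less.prems .
    have IHe: "(\<forall>i\<in>{1..m-e}. \<forall>j\<in>{1..m-e}. (i, j) \<noteq> (m-e, m-e) \<longrightarrow> bform M (LA e i j) (LB e i j) = 0) \<and>
      (bform M (LA e (m-e) (m-e)) (LB e (m-e) (m-e)) = 0 \<longleftrightarrow> bform M (P m m) (P m m) = 0)"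
      using less.IH[of e] ef dle by auto
    have IHf: "\<forall>i\<in>{1..m-f}. \<forall>j\<in>{1..m-f}. (i, j) \<noteq> (m-f, m-f) \<longrightarrow> bform M (LA f i j) (LB f i j) = 0"
      using less.IH[of f] ef dle by auto
    have n1: "m - d + 1 = m - e" "m - e + 1 = m - f" "d - 1 = e" "e - 1 = f" using ef dle by auto
    have lAd: "laplace_A (m - e) (LA e) (LA d)" using lA[of d] ef dle n1 by simp
    have lBd: "laplace_B (m - e) (LB e) (LB d)" using lB[of d] ef dle n1 by simp
    have lAe: "laplace_A (m - f) (LA f) (LA e)" using lA[of e] ef dle n1 by simp
    have lBe: "laplace_B (m - f) (LB f) (LB e)" using lB[of e] ef dle n1 by simp
    have qAe: "qnet (m - e) (LA e)" using qA[of e] dle ef by simp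
    have qBe: "qnet (m - e) (LB e)" using qB[of e] dle ef by simp
    have mf: "m - f = Suc (Suc (m - d))" "m - e = Suc (m - d)" using ef dle by auto
    have key: "\<exists>x x' y y' z z' t. t \<noteq> 0 \<and> t * bform M (LA d i j) (LB d i j) =
       bform M (LA e (Suc i) (Suc j)) (LB e (Suc i) (Suc j))
       - x * x' * bform M (LA e (Suc i) j) (LB e (Suc i) j)
       - y * y' * bform M (LA e i (Suc j)) (LB e i (Suc j))
       + z * z' * bform M (LA e i j) (LB e i j)"
      if ij: "i \<in> {1..m-d}" "j \<in> {1..m-d}" for i j
    proof -
      have ij': "i \<in> {1..<m-e}" "j \<in> {1..<m-e}" using ij mf by auto
      have ij1: "i \<in> {1..<m-f}" "j \<in> {1..<m-f}" "Suc i \<in> {1..<m-f}" "Suc j \<in> {1..<m-f}"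
        using ij mf by auto
      have cen: "bform M (LA f (Suc i) (Suc j)) (LB f (Suc i) (Suc j)) = 0"
        using IHf ij mf by auto
      show ?thesis
        by (rule step_lemma[OF qnet_quad[OF qAe ij'] qnet_quad[OF qBe ij']
          lapA_facts(1-3)[OF lAd ij'] lapB_facts(1-3)[OF lBd ij']
          lapA_facts(5)[OF lAe ij1(1,2)] lapA_facts(4)[OF lAe ij1(1,4)]
          lapA_facts(5)[OF lAe ij1(3,2)] lapA_facts(4)[OF lAe ij1(3,4)]
          lapB_facts(5)[OF lBe ij1(1,2)] lapB_facts(4)[OF lBe ij1(3,2)]
          lapB_facts(5)[OF lBe ij1(1,4)] lapB_facts(4)[OF lBe ij1(3,4)] cen])
    qed
    show ?thesis
    proof
      show "\<forall>i\<in>{1..m-d}. \<forall>j\<in>{1..m-d}. (i, j) \<noteq> (m-d, m-d) \<longrightarrow> bform M (LA d i j) (LB d i j) = 0"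
      proof (intro ballI impI)
        fix i j assume ij: "i \<in> {1..m-d}" "j \<in> {1..m-d}" and nc: "(i, j) \<noteq> (m-d, m-d)"
        obtain x x' y y' z z' t where t: "t \<noteq> 0" "t * bform M (LA d i j) (LB d i j) =
           bform M (LA e (Suc i) (Suc j)) (LB e (Suc i) (Suc j))
           - x * x' * bform M (LA e (Suc i) j) (LB e (Suc i) j)
           - y * y' * bform M (LA e i (Suc j)) (LB e i (Suc j))
           + z * z' * bform M (LA e i j) (LB e i j)"
          using key[OF ij] by blast
        have "bform M (LA e (Suc i) (Suc j)) (LB e (Suc i) (Suc j)) = 0" using IHe ij nc mf by auto
        moreover have "bform M (LA e (Suc i) j) (LB e (Suc i) j) = 0" using IHe ij mf by auto
        moreover have "bform M (LA e i (Suc j)) (LB e i (Suc j)) = 0" using IHe ij mf by auto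
        moreover have "bform M (LA e i j) (LB e i j) = 0" using IHe ij mf by auto
        ultimately show "bform M (LA d i j) (LB d i j) = 0" using t by simp
      qed
    next
      let ?k = "m - d"
      have kk: "?k \<in> {1..m-d}" using dle m2 by auto
      obtain x x' y y' z z' t where t: "t \<noteq> 0" "t * bform M (LA d ?k ?k) (LB d ?k ?k) =
           bform M (LA e (Suc ?k) (Suc ?k)) (LB e (Suc ?k) (Suc ?k))
           - x * x' * bform M (LA e (Suc ?k) ?k) (LB e (Suc ?k) ?k)
           - y * y' * bform M (LA e ?k (Suc ?k)) (LB e ?k (Suc ?k))
           + z * z' * bform M (LA e ?k ?k) (LB e ?k ?k)"
        using key[OF kk kk] by blast
      have "bform M (LA e (Suc ?k) ?k) (LB e (Suc ?k) ?k) = 0" using IHe kk mf by auto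
      moreover have "bform M (LA e ?k (Suc ?k)) (LB e ?k (Suc ?k)) = 0" using IHe kk mf by auto
      moreover have "bform M (LA e ?k ?k) (LB e ?k ?k) = 0" using IHe kk mf by auto
      ultimately have "t * bform M (LA d ?k ?k) (LB d ?k ?k) =
          bform M (LA e (m-e) (m-e)) (LB e (m-e) (m-e))" using t mf by simp
      then show "bform M (LA d (m-d) (m-d)) (LB d (m-d) (m-d)) = 0 \<longleftrightarrow> bform M (P m m) (P m m) = 0"
        using t(1) IHe by auto
    qed
  qed
qed


theorem theorem1p1:
  fixes m :: nat
    and P :: "nat \<Rightarrow> nat \<Rightarrow> real^'n"
    and LA LB :: "nat \<Rightarrow> nat \<Rightarrow> nat \<Rightarrow> real^'n"
    and M :: "real^'n^'n"
  assumes "m \<ge> 2"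
    and "CARD('n) \<ge> 3"
    and "qnet m P"
    and "LA 0 = P" and "LB 0 = P"
    and "\<forall>d\<in>{1..m-1}. laplace_A (m - d + 1) (LA (d - 1)) (LA d) \<and> qnet (m - d) (LA d)"
    and "\<forall>d\<in>{1..m-1}. laplace_B (m - d + 1) (LB (d - 1)) (LB d) \<and> qnet (m - d) (LB d)"
    and "transpose M = M" and "M \<noteq> 0"
    and "\<forall>i\<in>{1..m}. \<forall>j\<in>{1..m}. (i, j) \<noteq> (m, m) \<longrightarrow> on_quadric M (P i j)"
  shows "on_quadric M (P m m) \<longleftrightarrow> conjugate M (LA (m - 1) 1 1) (LB (m - 1) 1 1)"
proof -
  have "bform M (LA (m-1) (m-(m-1)) (m-(m-1))) (LB (m-1) (m-(m-1)) (m-(m-1))) = 0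
      \<longleftrightarrow> bform M (P m m) (P m m) = 0"
    using main_induction[OF assms(1,3,4,5,6,7,8,10), of "m - 1"] by blast
  moreover have "m - (m - 1) = 1" using assms(1) by simp
  ultimately show ?thesis by (simp add: on_quadric_def conjugate_def)
qed

end
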